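(* Let $f\in A[X]$ be monic with discriminant $\Delta=\mathrm{Res}_X(f,f')\neq 0$, $r=v(\Delta)$, and let $N>2r$ be an integer. Let $f_N\in(A/\pi^NA)[X]$ be the reduction of $f$ modulo $\pi^N$ and $S_N\subseteq A/\pi^NA$ its set of roots. Then every root of $f$ in $K$ lies in $A$, and the map $x\mapsto[\overline{x}]$ (where $\overline{x}$ is the reduction of $x$ modulo $\pi^NA$ and $[\cdot]$ the $\approx$-class) is a bijection from the set of roots of $f$ in $K$ onto $S_N/\approx$. In particular, the number of roots of $f$ in $K$ equals $|S_N/\approx|$.
   Context: $K$ is a field complete with respect to a non-archimedean discrete valuation $v$, normalized by $v(\pi)=1$ for a uniformizer $\pi$ of the valuation ring $A=\{x\in K: v(x)\geq 0\}$; the residue field $A/\pi A$ is finite. The equivalence relation $\approx$ on $S_N$ is: $x\approx y$ iff either $N\leq r$ and $x=y$, or $N>r$ and $x\equiv y \pmod{\overline{\pi}^{\,r+1}}$, where $\overline{\pi}$ is the image of $\pi$ in $A/\pi^NA$. *)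

theory Defs
  imports "Subresultants.Resultant_Prelim"
begin

text \<open>A normalized discrete valuation on a field 'a, given on nonzero elements
  (the value at 0, conventionally infinity, is never used).\<close>
definition discrete_valuation :: "('a::field \<Rightarrow> int) \<Rightarrow> bool" where
  "discrete_valuation v \<longleftrightarrow>
     (\<forall>x y. x \<noteq> 0 \<longrightarrow> y \<noteq> 0 \<longrightarrow> v (x * y) = v x + v y) \<and>
     (\<forall>x y. x \<noteq> 0 \<longrightarrow> y \<noteq> 0 \<longrightarrow> x + y \<noteq> 0 \<longrightarrow> min (v x) (v y) \<le> v (x + y))"

definition valring :: "('a::field \<Rightarrow> int) \<Rightarrow> 'a set" where
  "valring v = {x. x = 0 \<or> 0 \<le> v x}"

definition val_complete :: "('a::field \<Rightarrow> int) \<Rightarrow> bool" where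
  "val_complete v \<longleftrightarrow>
     (\<forall>s :: nat \<Rightarrow> 'a.
        (\<forall>n::int. \<exists>M. \<forall>i\<ge>M. \<forall>j\<ge>M. s i = s j \<or> n \<le> v (s i - s j)) \<longrightarrow>
        (\<exists>L. \<forall>n::int. \<exists>M. \<forall>i\<ge>M. s i = L \<or> n \<le> v (s i - L)))"

definition pideal :: "('a::field \<Rightarrow> int) \<Rightarrow> 'a \<Rightarrow> nat \<Rightarrow> 'a set" where
  "pideal v \<pi> N = (\<lambda>c. \<pi> ^ N * c) ` valring v"

definition modrel :: "('a::field \<Rightarrow> int) \<Rightarrow> 'a \<Rightarrow> nat \<Rightarrow> ('a \<times> 'a) set" where
  "modrel v \<pi> N = {(a, b). a \<in> valring v \<and> b \<in> valring v \<and> a - b \<in> pideal v \<pi> N}"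

definition quot_ring :: "('a::field \<Rightarrow> int) \<Rightarrow> 'a \<Rightarrow> nat \<Rightarrow> 'a set set" where
  "quot_ring v \<pi> N = valring v // modrel v \<pi> N"

definition red :: "('a::field \<Rightarrow> int) \<Rightarrow> 'a \<Rightarrow> nat \<Rightarrow> 'a \<Rightarrow> 'a set" where
  "red v \<pi> N x = modrel v \<pi> N `` {x}"

text \<open>S_N: the roots in A / \<pi>^N A of the reduction f_N of f (f with coefficients in A):
  a class red x is a root of f_N iff red (f(x)) = red 0.\<close>
definition roots_mod :: "('a::field \<Rightarrow> int) \<Rightarrow> 'a \<Rightarrow> nat \<Rightarrow> 'a poly \<Rightarrow> 'a set set" where
  "roots_mod v \<pi> N f =
     {red v \<pi> N x | x. x \<in> valring v \<and> red v \<pi> N (poly f x) = red v \<pi> N 0}"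

text \<open>The relation \<approx> on S_N: for N \<le> r equality; for N > r congruence modulo
  (image of \<pi>)^(r+1) in A / \<pi>^N A, i.e. the classes have representatives whose
  difference lies in \<pi>^(r+1) A + \<pi>^N A.\<close>
definition approx_rel ::
  "('a::field \<Rightarrow> int) \<Rightarrow> 'a \<Rightarrow> nat \<Rightarrow> nat \<Rightarrow> 'a poly \<Rightarrow> ('a set \<times> 'a set) set" where
  "approx_rel v \<pi> N r f =
     {(X, Y). X \<in> roots_mod v \<pi> N f \<and> Y \<in> roots_mod v \<pi> N f \<and>
        (if N \<le> r then X = Y
         else (\<exists>x\<in>X. \<exists>y\<in>Y. \<exists>a\<in>pideal v \<pi> (r + 1). \<exists>b\<in>pideal v \<pi> N. x - y = a + b))}"

end

theory Submission
  imports Defs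
begin

definition Gv :: "('a::field \<Rightarrow> int) \<Rightarrow> int \<Rightarrow> 'a \<Rightarrow> bool" where
  "Gv v k y \<longleftrightarrow> y = 0 \<or> k \<le> v y"

locale dval =
  fixes v :: "'a::field \<Rightarrow> int"
  assumes dv: "discrete_valuation v"
begin

lemma vmult: "x \<noteq> 0 \<Longrightarrow> y \<noteq> 0 \<Longrightarrow> v (x * y) = v x + v y"
  using dv unfolding discrete_valuation_def by blast

lemma vadd: "x \<noteq> 0 \<Longrightarrow> y \<noteq> 0 \<Longrightarrow> x + y \<noteq> 0 \<Longrightarrow> min (v x) (v y) \<le> v (x + y)"
  using dv unfolding discrete_valuation_def by blast

lemma v1: "v 1 = 0"
  using vmult[of 1 1] by simp

lemma vm1: "v (-1) = 0"
  using vmult[of "-1" "-1"] v1 by simp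

lemma vneg: "x \<noteq> 0 \<Longrightarrow> v (- x) = v x"
  using vmult[of "-1" x] vm1 by simp

lemma vinv: "x \<noteq> 0 \<Longrightarrow> v (inverse x) = - v x"
  using vmult[of x "inverse x"] v1 by simp

lemma vdiv: "x \<noteq> 0 \<Longrightarrow> y \<noteq> 0 \<Longrightarrow> v (x / y) = v x - v y"
  by (simp add: divide_inverse vmult vinv)

lemma G0[simp]: "Gv v k 0" unfolding Gv_def by simp

lemma G_add: "Gv v k a \<Longrightarrow> Gv v k b \<Longrightarrow> Gv v k (a + b)"
  unfolding Gv_def using vadd[of a b] by fastforce

lemma G_neg: "Gv v k a \<Longrightarrow> Gv v k (- a)"
  unfolding Gv_def using vneg[of a] by (cases "a = 0") auto

lemma G_neg_iff: "Gv v k (- a) = Gv v k a"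
  using G_neg[of k a] G_neg[of k "-a"] by auto

lemma G_diff: "Gv v k a \<Longrightarrow> Gv v k b \<Longrightarrow> Gv v k (a - b)"
  using G_add[of k a "-b"] G_neg[of k b] by simp

lemma G_mult: "Gv v k a \<Longrightarrow> Gv v m b \<Longrightarrow> Gv v (k + m) (a * b)"
  unfolding Gv_def using vmult[of a b] by (cases "a = 0"; cases "b = 0") auto

lemma G_mono: "m \<le> k \<Longrightarrow> Gv v k a \<Longrightarrow> Gv v m a"
  unfolding Gv_def by auto

lemma G1: "Gv v 0 1" unfolding Gv_def using v1 by simp

lemma G_mult0: "Gv v 0 a \<Longrightarrow> Gv v k b \<Longrightarrow> Gv v k (a * b)"
  using G_mult[of 0 a k b] by simp

lemma G_pow0: "Gv v 0 a \<Longrightarrow> Gv v 0 (a ^ n)"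
  by (induction n) (auto simp: G1 dest: G_mult0)

lemma G_of_nat: "Gv v 0 (of_nat n)"
  by (induction n) (auto simp: G1 intro: G_add)

lemma G_of_int: "Gv v 0 (of_int n)"
proof (cases "n \<ge> 0")
  case True then show ?thesis using G_of_nat[of "nat n"] by simp
next
  case False then have "of_int n = - (of_nat (nat (- n)) :: 'a)" by simp
  then show ?thesis using G_of_nat[of "nat (-n)"] G_neg by metis
qed

lemma G_sum: "(\<And>i. i \<in> I \<Longrightarrow> Gv v k (f i)) \<Longrightarrow> Gv v k (sum f I)"
  by (induction I rule: infinite_finite_induct) (auto intro: G_add)

lemma G_prod0: "(\<And>i. i \<in> I \<Longrightarrow> Gv v 0 (f i)) \<Longrightarrow> Gv v 0 (prod f I)"
  by (induction I rule: infinite_finite_induct) (auto simp: G1 intro: G_mult0)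

lemma G_self: "y \<noteq> 0 \<Longrightarrow> \<not> Gv v (v y + 1) y"
  unfolding Gv_def by auto

lemma G_all_zero: "(\<And>n. n \<ge> 0 \<Longrightarrow> Gv v n y) \<Longrightarrow> y = 0"
  using G_self[of y] unfolding Gv_def by (metis add.commute le_add_same_cancel2 linear order_trans zero_le_one)

lemma key: assumes "a \<noteq> 0" "Gv v (v a + 1) b" shows "a + b \<noteq> 0 \<and> v (a + b) = v a"
proof (cases "b = 0")
  case True then show ?thesis using assms by simp
next
  case False
  then have vb: "v b \<ge> v a + 1" using assms unfolding Gv_def by auto
  have ne: "a + b \<noteq> 0"
  proof
    assume "a + b = 0" then have "b = - a" by (simp add: eq_neg_iff_add_eq_0 add.commute)
    then show False using vb vneg[OF assms(1)] by simp
  qed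
  have "min (v a) (v b) \<le> v (a + b)" using vadd[OF assms(1) False ne] .
  then have 1: "v a \<le> v (a + b)" using vb by simp
  have "a = (a + b) + (- b)" by simp
  then have "min (v (a + b)) (v (- b)) \<le> v a"
    using vadd[OF ne, of "- b"] False assms(1) by (metis neg_equal_0_iff_equal)
  then have "v a \<ge> v (a + b)" using vb vneg[OF False] by simp
  with 1 ne show ?thesis by simp
qed

end
context dval begin

definition cA :: "'a poly \<Rightarrow> bool" where "cA p \<longleftrightarrow> (\<forall>i. Gv v 0 (coeff p i))"

lemma poly_G: "cA p \<Longrightarrow> Gv v 0 x \<Longrightarrow> Gv v 0 (poly p x)"
  unfolding cA_def poly_altdef by (intro G_sum G_mult0 G_pow0) auto

lemma cA_pderiv: "cA p \<Longrightarrow> cA (pderiv p)"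
  unfolding cA_def coeff_pderiv by (metis G_mult0 G_of_nat)

lemma taylor: "cA p \<Longrightarrow> Gv v 0 x \<Longrightarrow> Gv v 0 h \<Longrightarrow>
   \<exists>g. Gv v 0 g \<and> poly p (x + h) = poly p x + h * poly (pderiv p) x + h^2 * g"
proof (induction p rule: pCons_induct)
  case 0 then show ?case by (intro exI[of _ 0]) simp
next
  case (pCons a p)
  have cp: "cA p" using "pCons.prems"(1) unfolding cA_def by (metis coeff_pCons_Suc)
  obtain g where g: "Gv v 0 g" "poly p (x + h) = poly p x + h * poly (pderiv p) x + h^2 * g"
    using "pCons.IH"[OF cp "pCons.prems"(2,3)] by blast
  have d: "Gv v 0 (poly (pderiv p) x)" using poly_G[OF cA_pderiv[OF cp] "pCons.prems"(2)] .
  show ?case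
  proof (intro exI conjI)
    show "Gv v 0 (x * g + poly (pderiv p) x + h * g)"
      using g(1) d "pCons.prems" by (intro G_add G_mult0) auto
    show "poly (pCons a p) (x + h) = poly (pCons a p) x + h * poly (pderiv (pCons a p)) x
        + h^2 * (x * g + poly (pderiv p) x + h * g)"
      unfolding poly_pCons pderiv_pCons poly_add g(2) by (simp add: power2_eq_square algebra_simps)
  qed
qed

lemma taylor1: assumes "cA p" "Gv v 0 x" "Gv v 0 h"
  shows "\<exists>g. Gv v 0 g \<and> poly p (x + h) = poly p x + h * g"
proof -
  obtain g where g: "Gv v 0 g" "poly p (x + h) = poly p x + h * poly (pderiv p) x + h^2 * g"
    using taylor[OF assms] by blast
  show ?thesis
    using g assms poly_G[OF cA_pderiv[OF assms(1)] assms(2)]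
    by (intro exI[of _ "poly (pderiv p) x + h * g"]) 
       (auto intro!: G_add G_mult0 simp: power2_eq_square algebra_simps)
qed

end
context dval begin
lemma det_G: assumes "\<And>i j. i < dim_row M \<Longrightarrow> j < dim_col M \<Longrightarrow> Gv v 0 (M $$ (i,j))"
  shows "Gv v 0 (det M)"
proof (cases "dim_row M = dim_col M")
  case True
  have eq: "det M = (\<Sum>p\<in>{p. p permutes {0..<dim_row M}}. signof p * (\<Prod>i = 0..<dim_row M. M $$ (i, p i)))"
    unfolding det_def using True by (rule if_P)
  have "Gv v 0 (\<Sum>p\<in>{p. p permutes {0..<dim_row M}}. signof p * (\<Prod>i = 0..<dim_row M. M $$ (i, p i)))"
  proof (rule G_sum)
    fix p assume p: "p \<in> {p. p permutes {0..<dim_row M}}"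
    have "Gv v 0 (\<Prod>i = 0..<dim_row M. M $$ (i, p i))"
    proof (rule G_prod0)
      fix i assume i: "i \<in> {0..<dim_row M}"
      have pp: "p permutes {0..<dim_row M}" using p by simp
      have "p i \<in> {0..<dim_row M}" using permutes_in_image[OF pp] i by simp
      then show "Gv v 0 (M $$ (i, p i))" using assms[of i "p i"] i True by simp
    qed
    then show "Gv v 0 (signof p * (\<Prod>i = 0..<dim_row M. M $$ (i, p i)))"
      by (rule G_mult0[OF G_of_int])
  qed
  then show ?thesis unfolding eq .
next
  case False
  have "det M = 0" unfolding det_def using False by (rule if_not_P)
  then show ?thesis by (simp only: G0)
qed
end
context dval begin
lemma cofactor_G: assumes M: "M \<in> carrier_mat n n" and MG: "\<And>i j. i < n \<Longrightarrow> j < n \<Longrightarrow> Gv v 0 (M $$ (i,j))"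
  shows "Gv v 0 (cofactor M i j)"
  unfolding cofactor_def
proof (rule G_mult0)
  show "Gv v 0 ((- 1) ^ (i + j))" by (rule G_pow0[OF G_neg[OF G1]])
  show "Gv v 0 (det (mat_delete M i j))"
  proof (rule det_G)
    fix i' j' assume d: "i' < dim_row (mat_delete M i j)" "j' < dim_col (mat_delete M i j)"
    have dr: "dim_row M = n" "dim_col M = n" using M by auto
    have i': "i' < n - 1" and j': "j' < n - 1" using d dr by auto
    have eq: "mat_delete M i j $$ (i', j') = M $$ (if i' < i then i' else Suc i', if j' < j then j' else Suc j')"
      unfolding mat_delete_def using i' j' dr by simp
    have "(if i' < i then i' else Suc i') < n" "(if j' < j then j' else Suc j') < n" using i' j' by auto
    then show "Gv v 0 (mat_delete M i j $$ (i', j'))" unfolding eq by (rule MG)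
  qed
qed

lemma sum_rev_poly: fixes Q :: "'a poly" and x :: 'a assumes "degree Q < d"
  shows "(\<Sum>j<d. coeff Q (d - 1 - j) * x ^ (d - 1 - j)) = poly Q x"
proof -
  have "(\<Sum>j<d. coeff Q (d - 1 - j) * x ^ (d - 1 - j)) = (\<Sum>j<d. coeff Q j * x ^ j)"
    using sum.nat_diff_reindex[of "\<lambda>i. coeff Q i * x ^ i" d] by simp
  also have "\<dots> = (\<Sum>j\<le>degree Q. coeff Q j * x ^ j)"
  proof (rule sum.mono_neutral_right)
    show "{..degree Q} \<subseteq> {..<d}" using assms by auto
    show "\<forall>i\<in>{..<d} - {..degree Q}. coeff Q i * x ^ i = 0" by (simp add: coeff_eq_0)
  qed simp
  also have "\<dots> = poly Q x" by (simp only: poly_altdef)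
  finally show ?thesis .
qed
end
context dval begin
lemma bezout: assumes "cA p" "cA q" "degree p + degree q > 0" "Gv v 0 x"
  shows "\<exists>a b. Gv v 0 a \<and> Gv v 0 b \<and> resultant p q = a * poly p x + b * poly q x"
proof -
  define m where "m = degree p"
  define n where "n = degree q"
  define d where "d = m + n"
  define S where "S = sylvester_mat p q"
  have S: "S \<in> carrier_mat d d" unfolding S_def d_def m_def n_def by (rule sylvester_carrier_mat)
  have d0: "d > 0" using assms(3) unfolding d_def m_def n_def by simp
  define C where "C k = cofactor S k (d - 1)" for k
  have SG: "Gv v 0 (S $$ (i,j))" if "i < d" "j < d" for i j
    using that assms(1,2) unfolding S_def cA_def
    by (subst sylvester_index_mat) (auto simp: d_def m_def n_def)
  have CG: "Gv v 0 (C k)" for k unfolding C_def using cofactor_G[OF S SG] by blast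
  have adj: "(\<Sum>k<d. S $$ (k,j) * C k) = (if j = d - 1 then det S else 0)" if j: "j < d" for j
  proof -
    have "(adj_mat S * S) $$ (d - 1, j) = (det S \<cdot>\<^sub>m 1\<^sub>m d) $$ (d - 1, j)"
      using adj_mat(3)[OF S] by simp
    moreover have "(adj_mat S * S) $$ (d - 1, j) = (\<Sum>k<d. S $$ (k,j) * C k)"
      unfolding times_mat_def scalar_prod_def adj_mat_def C_def using j S d0
      by (auto intro: sum.cong simp: lessThan_atLeast0 mult.commute)
    moreover have "(det S \<cdot>\<^sub>m 1\<^sub>m d) $$ (d - 1, j) = (if j = d - 1 then det S else 0)"
      using j d0 by auto
    ultimately show ?thesis by simp
  qed
  have degle: "degree (monom 1 t * P) \<le> t + degree P" for t and P :: "'a poly"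
    using degree_mult_le[of "monom 1 t" P] degree_monom_le[of "1::'a" t] by linarith
  have u: "(\<Sum>j<d. S $$ (k,j) * x ^ (d - 1 - j)) =
      (if k < n then x ^ (n - 1 - k) * poly p x else x ^ (d - 1 - k) * poly q x)" if k: "k < d" for k
  proof (cases "k < n")
    case True
    define Q where "Q = monom 1 (n - 1 - k) * p"
    have "(\<Sum>j<d. S $$ (k,j) * x ^ (d - 1 - j)) = (\<Sum>j<d. coeff Q (d - 1 - j) * x ^ (d - 1 - j))"
    proof (intro sum.cong refl)
      fix j assume "j \<in> {..<d}"
      then have j: "j < d" by simp
      have "S $$ (k,j) = coeff (monom 1 (n - k) * p) (d - j)"
        unfolding S_def using sylvester_index_mat2[of k p q j] k j True
        by (simp add: d_def m_def n_def)
      also have "\<dots> = coeff Q (d - 1 - j)"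
        unfolding Q_def coeff_monom_mult using True j by auto
      finally show "S $$ (k,j) * x ^ (d - 1 - j) = coeff Q (d - 1 - j) * x ^ (d - 1 - j)" by simp
    qed
    also have "\<dots> = poly Q x"
      using degle[of "n - 1 - k" p] True by (intro sum_rev_poly) (auto simp: Q_def d_def m_def)
    finally show ?thesis using True by (simp add: Q_def poly_monom)
  next
    case False
    define Q where "Q = monom 1 (d - 1 - k) * q"
    have "(\<Sum>j<d. S $$ (k,j) * x ^ (d - 1 - j)) = (\<Sum>j<d. coeff Q (d - 1 - j) * x ^ (d - 1 - j))"
    proof (intro sum.cong refl)
      fix j assume "j \<in> {..<d}"
      then have j: "j < d" by simp
      have "S $$ (k,j) = coeff (monom 1 (d - k) * q) (d - j)"
        unfolding S_def using sylvester_index_mat2[of k p q j] k j False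
        by (simp add: d_def m_def n_def)
      also have "\<dots> = coeff Q (d - 1 - j)"
        unfolding Q_def coeff_monom_mult using k j by auto
      finally show "S $$ (k,j) * x ^ (d - 1 - j) = coeff Q (d - 1 - j) * x ^ (d - 1 - j)" by simp
    qed
    also have "\<dots> = poly Q x"
      using degle[of "d - 1 - k" q] False k by (intro sum_rev_poly) (auto simp: Q_def d_def n_def)
    finally show ?thesis using False by (simp add: Q_def poly_monom)
  qed
  have "(\<Sum>j<d. (if j = d - 1 then det S else 0) * x ^ (d - 1 - j)) = (\<Sum>j<d. if j = d - 1 then det S * x ^ (d - 1 - j) else 0)"
    by (intro sum.cong) auto
  also have "\<dots> = det S" using d0 by (subst sum.delta) auto
  finally have "det S = (\<Sum>j<d. (if j = d - 1 then det S else 0) * x ^ (d - 1 - j))" by simp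
  also have "\<dots> = (\<Sum>j<d. \<Sum>k<d. S $$ (k,j) * C k * x ^ (d - 1 - j))"
  proof (intro sum.cong refl)
    fix j assume "j \<in> {..<d}"
    then have j: "j < d" by simp
    show "(if j = d - 1 then det S else 0) * x ^ (d - 1 - j) = (\<Sum>k<d. S $$ (k,j) * C k * x ^ (d - 1 - j))"
      by (simp only: adj[OF j, symmetric] sum_distrib_right)
  qed
  also have "\<dots> = (\<Sum>k<d. C k * (\<Sum>j<d. S $$ (k,j) * x ^ (d - 1 - j)))"
  proof -
    have "(\<Sum>j<d. \<Sum>k<d. S $$ (k,j) * C k * x ^ (d - 1 - j)) = (\<Sum>k<d. \<Sum>j<d. S $$ (k,j) * C k * x ^ (d - 1 - j))"
      by (rule sum.swap)
    also have "\<dots> = (\<Sum>k<d. C k * (\<Sum>j<d. S $$ (k,j) * x ^ (d - 1 - j)))"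
    proof -
      have tri: "\<And>a b c::'a. a * b * c = b * (a * c)" by (simp add: ac_simps)
      show ?thesis unfolding sum_distrib_left by (simp only: tri)
    qed
    finally show ?thesis .
  qed
  also have "\<dots> = (\<Sum>k<d. C k * (if k < n then x ^ (n - 1 - k) * poly p x else x ^ (d - 1 - k) * poly q x))"
  proof (intro sum.cong refl)
    fix k assume "k \<in> {..<d}"
    then have k: "k < d" by simp
    show "C k * (\<Sum>j<d. S $$ (k,j) * x ^ (d - 1 - j)) = C k * (if k < n then x ^ (n - 1 - k) * poly p x else x ^ (d - 1 - k) * poly q x)"
      by (simp only: u[OF k])
  qed
  also have "\<dots> = (\<Sum>k<n. C k * (x ^ (n - 1 - k) * poly p x)) + (\<Sum>k\<in>{n..<d}. C k * (x ^ (d - 1 - k) * poly q x))"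
  proof -
    define F where "F k = C k * (if k < n then x ^ (n - 1 - k) * poly p x else x ^ (d - 1 - k) * poly q x)" for k
    have e: "{..<d} = {..<n} \<union> {n..<d}" unfolding d_def by auto
    have "sum F {..<d} = sum F {..<n} + sum F {n..<d}"
      unfolding e by (rule sum.union_disjoint) auto
    moreover have "sum F {..<n} = (\<Sum>k<n. C k * (x ^ (n - 1 - k) * poly p x))"
      by (rule sum.cong) (simp_all add: F_def)
    moreover have "sum F {n..<d} = (\<Sum>k\<in>{n..<d}. C k * (x ^ (d - 1 - k) * poly q x))"
      by (rule sum.cong) (simp_all add: F_def)
    ultimately show ?thesis unfolding F_def by simp
  qed
  also have "\<dots> = (\<Sum>k<n. C k * x ^ (n - 1 - k)) * poly p x + (\<Sum>k\<in>{n..<d}. C k * x ^ (d - 1 - k)) * poly q x"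
    by (simp only: sum_distrib_right mult.assoc)
  finally have "resultant p q = (\<Sum>k<n. C k * x ^ (n - 1 - k)) * poly p x + (\<Sum>k\<in>{n..<d}. C k * x ^ (d - 1 - k)) * poly q x"
    unfolding resultant_def S_def .
  moreover have "Gv v 0 (\<Sum>k<n. C k * x ^ (n - 1 - k))" "Gv v 0 (\<Sum>k\<in>{n..<d}. C k * x ^ (d - 1 - k))"
    by (rule G_sum, rule G_mult0[OF CG G_pow0[OF assms(4)]])+
  ultimately show ?thesis by (intro exI conjI)
qed

end
context dval begin

lemma vpow: "x \<noteq> 0 \<Longrightarrow> v (x ^ n) = int n * v x"
  by (induction n) (auto simp: v1 vmult algebra_simps)

lemma newton_step:
  assumes cf: "cA f" and y: "Gv v 0 y" and fp: "poly (pderiv f) y \<noteq> 0" "v (poly (pderiv f) y) = e"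
    and fy: "Gv v m (poly f y)" and m: "m \<ge> 2 * e + 1"
  defines "y' \<equiv> y - poly f y / poly (pderiv f) y"
  shows "Gv v 0 y' \<and> poly (pderiv f) y' \<noteq> 0 \<and> v (poly (pderiv f) y') = e \<and>
         Gv v (m + 1) (poly f y') \<and> Gv v (m - e) (y' - y)"
proof (cases "poly f y = 0")
  case True then show ?thesis using y fp unfolding y'_def by simp
next
  case False
  define fpy where "fpy = poly (pderiv f) y"
  define k where "k = v (poly f y)"
  have e0: "e \<ge> 0" using poly_G[OF cA_pderiv[OF cf] y] fp unfolding Gv_def by auto
  have km: "k \<ge> m" using fy False unfolding Gv_def k_def by auto
  define h where "h = - (poly f y / fpy)"
  have hne: "poly f y / fpy \<noteq> 0" using False fp by (simp add: fpy_def)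
  have vh: "v h = k - e" unfolding h_def using vneg[OF hne] vdiv[OF False fp(1)] fp(2) k_def fpy_def by simp
  have hG: "Gv v (k - e) h" unfolding Gv_def using vh by simp
  have hG0: "Gv v 0 h" using G_mono[OF _ hG] km m e0 by simp
  have y'eq: "y' = y + h" unfolding y'_def h_def fpy_def by simp
  obtain g where g: "Gv v 0 g" "poly f (y + h) = poly f y + h * fpy + h^2 * g"
    using taylor[OF cf y hG0] unfolding fpy_def by blast
  have "poly f y + h * fpy = 0" unfolding h_def using fp(1) by (simp add: fpy_def)
  then have fy': "poly f y' = h * h * g" using g(2) y'eq by (simp add: power2_eq_square)
  have "Gv v ((k - e) + (k - e) + 0) (h * h * g)" using hG g(1) by (intro G_mult) auto
  then have G1': "Gv v (m + 1) (poly f y')" unfolding fy' by (rule G_mono[rotated]) (use km m in linarith)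
  obtain g2 where g2: "Gv v 0 g2" "poly (pderiv f) (y + h) = fpy + h * g2"
    using taylor1[OF cA_pderiv[OF cf] y hG0] unfolding fpy_def by blast
  have "Gv v ((k - e) + 0) (h * g2)" using hG g2(1) by (intro G_mult) auto
  have vfp: "v fpy = e" using fp(2) by (simp add: fpy_def)
  have ineq: "v fpy + 1 \<le> (k - e) + 0" using vfp km m by linarith
  have "Gv v (v fpy + 1) (h * g2)" by (rule G_mono[OF ineq \<open>Gv v ((k - e) + 0) (h * g2)\<close>])
  from key[OF _ this] fp(1) have "fpy + h * g2 \<noteq> 0 \<and> v (fpy + h * g2) = v fpy" by (simp add: fpy_def)
  then have D: "poly (pderiv f) y' \<noteq> 0 \<and> v (poly (pderiv f) y') = e"
    using g2(2) y'eq fp(2) fpy_def by simp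
  have "Gv v 0 y'" unfolding y'eq using y hG0 by (rule G_add)
  moreover have "Gv v (m - e) (y' - y)" using y'eq G_mono[OF _ hG] km by simp
  ultimately show ?thesis using D G1' by simp
qed

lemma hensel:
  assumes compl: "val_complete v" and cf: "cA f" and x0: "Gv v 0 x0"
    and fp: "poly (pderiv f) x0 \<noteq> 0" "v (poly (pderiv f) x0) = e"
    and fx: "Gv v c (poly f x0)" and c: "c \<ge> 2 * e + 1"
  shows "\<exists>\<alpha>. poly f \<alpha> = 0 \<and> Gv v 0 \<alpha> \<and> Gv v (c - e) (\<alpha> - x0)"
proof -
  define nx where "nx y = y - poly f y / poly (pderiv f) y" for y
  define s where "s n = (nx ^^ n) x0" for n
  have e0: "e \<ge> 0" using poly_G[OF cA_pderiv[OF cf] x0] fp unfolding Gv_def by auto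
  have inv: "Gv v 0 (s n) \<and> poly (pderiv f) (s n) \<noteq> 0 \<and> v (poly (pderiv f) (s n)) = e \<and>
      Gv v (c + int n) (poly f (s n))" for n
  proof (induction n)
    case 0 then show ?case using x0 fp fx by (simp add: s_def)
  next
    case (Suc n)
    have eq: "s (Suc n) = s n - poly f (s n) / poly (pderiv f) (s n)" by (simp add: s_def nx_def)
    have ci: "c + int (Suc n) = c + int n + 1" by simp
    show ?case using newton_step[OF cf, of "s n" e "c + int n"] Suc c unfolding eq ci by simp
  qed
  have inc: "Gv v (c - e + int n) (s (Suc n) - s n)" for n
  proof -
    have eq: "s (Suc n) = s n - poly f (s n) / poly (pderiv f) (s n)" by (simp add: s_def nx_def)
    have ce: "c - e + int n = c + int n - e" by simp
    show ?thesis using newton_step[OF cf, of "s n" e "c + int n"] inv[of n] c unfolding eq ce by simp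
  qed
  have cau: "Gv v (c - e + int i) (s j - s i)" if "i \<le> j" for i j
    using that
  proof (induction j rule: dec_induct)
    case base then show ?case by simp
  next
    case (step j)
    have "s (Suc j) - s i = (s (Suc j) - s j) + (s j - s i)" by simp
    moreover have "Gv v (c - e + int i) (s (Suc j) - s j)"
      using G_mono[OF _ inc[of j]] step(1) by simp
    ultimately show ?case using step(3) G_add by metis
  qed
  have cau2: "Gv v (c - e + int (min i j)) (s i - s j)" for i j
  proof (cases "i \<le> j")
    case True then show ?thesis using cau[OF True] G_neg_iff[of _ "s j - s i"] by (simp add: min_def)
  next
    case False then show ?thesis using cau[of j i] by (simp add: min_def)
  qed
  have "\<forall>n::int. \<exists>M. \<forall>i\<ge>M. \<forall>j\<ge>M. s i = s j \<or> n \<le> v (s i - s j)"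
  proof
    fix n :: int
    show "\<exists>M. \<forall>i\<ge>M. \<forall>j\<ge>M. s i = s j \<or> n \<le> v (s i - s j)"
    proof (intro exI allI impI)
      fix i j assume "nat n \<le> i" "nat n \<le> j"
      then have "n \<le> c - e + int (min i j)" using c e0 by (simp add: min_def) linarith
      then have "Gv v n (s i - s j)" by (rule G_mono[OF _ cau2])
      then show "s i = s j \<or> n \<le> v (s i - s j)" unfolding Gv_def by simp
    qed
  qed
  then obtain L where L: "\<forall>n::int. \<exists>M. \<forall>i\<ge>M. s i = L \<or> n \<le> v (s i - L)"
    using compl unfolding val_complete_def by blast
  have conv: "\<exists>M. \<forall>i\<ge>M. Gv v n (s i - L)" for n
    using L[rule_format, of n] unfolding Gv_def by auto
  obtain M0 where M0: "\<forall>i\<ge>M0. Gv v 0 (s i - L)" using conv by blast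
  have L0: "Gv v 0 L"
  proof -
    have "L = s M0 - (s M0 - L)" by simp
    moreover have "Gv v 0 (s M0 - (s M0 - L))" using G_diff[of 0 "s M0" "s M0 - L"] inv[of M0] M0 by simp
    ultimately show ?thesis by simp
  qed
  obtain M1 where M1: "\<forall>i\<ge>M1. Gv v (c - e) (s i - L)" using conv by blast
  have Lx: "Gv v (c - e) (L - x0)"
  proof -
    have "L - x0 = (s M1 - s 0) - (s M1 - L)" by (simp add: s_def)
    moreover have "Gv v (c - e) (s M1 - s 0)" using cau[of 0 M1] by simp
    moreover have "Gv v (c - e) (s M1 - L)" using M1 by simp
    ultimately show ?thesis using G_diff[of "c - e" "s M1 - s 0" "s M1 - L"] by simp
  qed
  have "poly f L = 0"
  proof (rule G_all_zero)
    fix n :: int assume n0: "n \<ge> 0"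
    obtain M where M: "\<forall>i\<ge>M. Gv v n (s i - L)" using conv by blast
    define i where "i = max M (nat n)"
    define h where "h = L - s i"
    have hG: "Gv v n h" unfolding h_def using M G_neg_iff[of n "s i - L"] by (simp add: i_def)
    have hG0: "Gv v 0 h" using G_mono[OF n0 hG] .
    obtain g where g: "Gv v 0 g" "poly f (s i + h) = poly f (s i) + h * g"
      using taylor1[OF cf _ hG0] inv[of i] by blast
    have "s i + h = L" unfolding h_def by simp
    moreover have "Gv v n (poly f (s i))"
    proof (rule G_mono[OF _ conjunct2[OF conjunct2[OF conjunct2[OF inv[of i]]]]])
      show "n \<le> c + int i" using c e0 n0 by (simp add: i_def)
    qed
    moreover have "Gv v n (h * g)" using G_mult[OF hG g(1)] by simp
    ultimately show "Gv v n (poly f L)" using g(2) G_add[of n "poly f (s i)" "h * g"] by simp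
  qed
  then show ?thesis using L0 Lx by blast
qed

lemma roots_in_A:
  assumes cf: "cA f" and mon: "lead_coeff f = 1" and r: "poly f x = 0"
  shows "Gv v 0 x"
proof (rule ccontr)
  assume nG: "\<not> Gv v 0 x"
  then have x0: "x \<noteq> 0" and vx: "v x < 0" unfolding Gv_def by auto
  define n where "n = degree f"
  have n0: "n > 0"
  proof (rule ccontr)
    assume "\<not> n > 0"
    then have "degree f = 0" by (simp add: n_def)
    then have "f = [:1:]" using mon by (metis degree_0_id)
    then show False using r by simp
  qed
  define y where "y = inverse x"
  have y0: "y \<noteq> 0" using x0 by (simp add: y_def)
  have vy: "v y \<ge> 1" using vinv[OF x0] vx by (simp add: y_def)
  have yG: "Gv v 1 y" using vy unfolding Gv_def by simp
  have trm: "x ^ i * y ^ n = y ^ (n - i)" if "i \<le> n" for i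
  proof -
    have "y ^ n = y ^ i * y ^ (n - i)" using that by (simp add: power_add[symmetric])
    then have "x ^ i * y ^ n = (x * y) ^ i * y ^ (n - i)" by (simp add: power_mult_distrib)
    then show ?thesis using x0 by (simp add: y_def)
  qed
  have "0 = (\<Sum>i\<le>n. coeff f i * x ^ i) * y ^ n" using r by (simp add: poly_altdef n_def)
  also have "\<dots> = (\<Sum>i\<le>n. coeff f i * y ^ (n - i))"
    unfolding sum_distrib_right by (intro sum.cong refl) (simp add: trm mult.assoc)
  also have "\<dots> = coeff f n + (\<Sum>i<n. coeff f i * y ^ (n - i))"
    by (simp add: lessThan_Suc_atMost[symmetric])
  also have "coeff f n = 1" using mon by (simp add: n_def)
  finally have eq: "1 = - (\<Sum>i<n. coeff f i * y ^ (n - i))" by (simp add: eq_neg_iff_add_eq_0)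
  have "Gv v 1 (\<Sum>i<n. coeff f i * y ^ (n - i))"
  proof (intro G_sum)
    fix i assume "i \<in> {..<n}"
    then have "y ^ (n - i) = y * y ^ (n - i - 1)" by (simp add: power_Suc[symmetric] Suc_diff_Suc)
    moreover have "Gv v (1 + 0) (y * y ^ (n - i - 1))"
      using yG G_pow0[of y] G_mono[OF _ yG] by (intro G_mult) auto
    ultimately show "Gv v 1 (coeff f i * y ^ (n - i))"
      using cf unfolding cA_def by (intro G_mult0) auto
  qed
  then have "Gv v 1 (1::'a)" using eq G_neg by metis
  then show False using v1 unfolding Gv_def by simp
qed

end
theorem theorem3p9:
  fixes v :: "'a::field \<Rightarrow> int" and \<pi> :: 'a and f :: "'a poly" and N :: nat
  assumes val: "discrete_valuation v"
    and unif: "\<pi> \<noteq> 0" "v \<pi> = 1"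
    and compl: "val_complete v"
    and resfin: "finite (quot_ring v \<pi> 1)"
    and coeffA: "\<forall>i. coeff f i \<in> valring v"
    and monic: "lead_coeff f = 1"
    and disc: "resultant f (pderiv f) \<noteq> 0"
    and N: "int N > 2 * v (resultant f (pderiv f))"
  shows "{x. poly f x = 0} \<subseteq> valring v \<and>
         bij_betw
           (\<lambda>x. approx_rel v \<pi> N (nat (v (resultant f (pderiv f)))) f `` {red v \<pi> N x})
           {x. poly f x = 0}
           (roots_mod v \<pi> N f // approx_rel v \<pi> N (nat (v (resultant f (pderiv f)))) f) \<and>
         card {x. poly f x = 0} =
           card (roots_mod v \<pi> N f // approx_rel v \<pi> N (nat (v (resultant f (pderiv f)))) f)"
proof -
  interpret dval v by unfold_locales (rule val)
  define \<Delta> where "\<Delta> = resultant f (pderiv f)"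
  have vr: "(y \<in> valring v) = Gv v 0 y" for y unfolding valring_def Gv_def by auto
  have cf: "cA f" using coeffA unfolding cA_def vr .
  have cf': "cA (pderiv f)" by (rule cA_pderiv[OF cf])
  have vpi: "\<pi> ^ n \<noteq> 0 \<and> v (\<pi> ^ n) = int n" for n using unif vpow[of \<pi> n] by simp
  have pid: "(y \<in> pideal v \<pi> k) = Gv v (int k) y" for k y
  proof
    assume "y \<in> pideal v \<pi> k"
    then obtain c where c0: "c \<in> valring v" "y = \<pi> ^ k * c" unfolding pideal_def by blast
    have c: "Gv v 0 c" "y = \<pi> ^ k * c" using c0 vr by simp_all
    have "Gv v (int k) (\<pi> ^ k)" using vpi[of k] unfolding Gv_def by simp
    from G_mult[OF this c(1)] show "Gv v (int k) y" using c(2) by simp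
  next
    assume G: "Gv v (int k) y"
    define c where "c = y / \<pi> ^ k"
    have yc: "y = \<pi> ^ k * c" using vpi[of k] by (simp add: c_def)
    have "c \<in> valring v"
    proof (cases "y = 0")
      case True then show ?thesis by (simp add: c_def valring_def)
    next
      case False
      then have "v c = v y - int k" using vdiv[OF False] vpi[of k] by (simp add: c_def)
      then show ?thesis using G False unfolding valring_def Gv_def by simp
    qed
    then show "y \<in> pideal v \<pi> k" unfolding pideal_def using yc by (rule rev_image_eqI)
  qed
  have roots: "Gv v 0 x" if "poly f x = 0" for x by (rule roots_in_A[OF cf monic that])
  have bez: "\<exists>a b. Gv v 0 a \<and> Gv v 0 b \<and> \<Delta> = a * poly f x + b * poly (pderiv f) x"
    if x: "Gv v 0 x" for x
  proof (cases "degree f + degree (pderiv f) > 0")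
    case True show ?thesis unfolding \<Delta>_def by (rule bezout[OF cf cf' True x])
  next
    case False
    then have d0: "degree f = 0" by simp
    then have "[:coeff f 0:] = f" by (rule degree_0_id)
    moreover have "coeff f 0 = 1" using monic d0 by simp
    ultimately have f1: "f = 1" by (simp add: pCons_one)
    then have "\<Delta> = 1" unfolding \<Delta>_def by simp
    then show ?thesis using f1 G1 by (intro exI[of _ 1] exI[of _ 0]) simp
  qed
  have D0: "\<Delta> \<noteq> 0" using disc unfolding \<Delta>_def .
  have vD: "v \<Delta> \<ge> 0"
  proof -
    obtain a b where ab: "Gv v 0 a" "Gv v 0 b" "\<Delta> = a * poly f 0 + b * poly (pderiv f) 0"
      using bez[OF G0] by blast
    have "Gv v 0 (a * poly f 0 + b * poly (pderiv f) 0)"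
      by (rule G_add[OF G_mult0[OF ab(1) poly_G[OF cf G0]] G_mult0[OF ab(2) poly_G[OF cf' G0]]])
    then show ?thesis using D0 ab(3) unfolding Gv_def by simp
  qed
  define r where "r = nat (v \<Delta>)"
  have rD: "int r = v \<Delta>" using vD unfolding r_def by simp
  have NvD: "int N \<ge> v \<Delta> + 1" "int N \<ge> 2 * v \<Delta> + 1" using N vD unfolding \<Delta>_def[symmetric] by linarith+
  have Nr: "\<not> N \<le> r" using NvD rD by linarith
  have sep: "\<alpha> = \<beta>" if fa: "poly f \<alpha> = 0" and fb: "poly f \<beta> = 0" and G: "Gv v (int r + 1) (\<alpha> - \<beta>)" for \<alpha> \<beta>
  proof (rule ccontr)
    assume ne: "\<alpha> \<noteq> \<beta>"
    define h where "h = \<beta> - \<alpha>"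
    have h0: "h \<noteq> 0" using ne by (simp add: h_def)
    have hG: "Gv v 0 h" unfolding h_def by (rule G_diff[OF roots[OF fb] roots[OF fa]])
    obtain g where g: "Gv v 0 g" "poly f (\<alpha> + h) = poly f \<alpha> + h * poly (pderiv f) \<alpha> + h^2 * g"
      using taylor[OF cf roots[OF fa] hG] by blast
    have "\<alpha> + h = \<beta>" by (simp add: h_def)
    then have "h * (poly (pderiv f) \<alpha> + h * g) = 0" using g(2) fa fb by (simp add: power2_eq_square algebra_simps)
    then have "poly (pderiv f) \<alpha> + h * g = 0" using h0 by simp
    then have fp: "poly (pderiv f) \<alpha> = - (h * g)" by (simp add: eq_neg_iff_add_eq_0)
    obtain a b where ab: "Gv v 0 a" "Gv v 0 b" "\<Delta> = a * poly f \<alpha> + b * poly (pderiv f) \<alpha>"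
      using bez[OF roots[OF fa]] by blast
    have De: "\<Delta> = (\<alpha> - \<beta>) * (b * g)" using ab(3) fp fa by (simp add: h_def algebra_simps)
    have "Gv v (int r + 1 + 0) ((\<alpha> - \<beta>) * (b * g))" by (rule G_mult[OF G G_mult0[OF ab(2) g(1)]])
    then have "Gv v (v \<Delta> + 1) \<Delta>" using De rD by simp
    then show False using G_self[OF D0] by simp
  qed
  have fpb: "poly (pderiv f) x \<noteq> 0 \<and> v (poly (pderiv f) x) \<le> v \<Delta>"
    if x: "Gv v 0 x" and fx: "Gv v (int N) (poly f x)" for x
  proof (rule ccontr)
    assume nc: "\<not> (poly (pderiv f) x \<noteq> 0 \<and> v (poly (pderiv f) x) \<le> v \<Delta>)"
    obtain a b where ab: "Gv v 0 a" "Gv v 0 b" "\<Delta> = a * poly f x + b * poly (pderiv f) x"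
      using bez[OF x] by blast
    have t1: "Gv v (v \<Delta> + 1) (a * poly f x)" by (rule G_mono[OF NvD(1) G_mult0[OF ab(1) fx]])
    have "Gv v (v \<Delta> + 1) (poly (pderiv f) x)" using nc unfolding Gv_def by auto
    then have t2: "Gv v (v \<Delta> + 1) (b * poly (pderiv f) x)" by (rule G_mult0[OF ab(2)])
    have "Gv v (v \<Delta> + 1) (a * poly f x + b * poly (pderiv f) x)" by (rule G_add[OF t1 t2])
    then have "Gv v (v \<Delta> + 1) \<Delta>" using ab(3) by simp
    then show False using G_self[OF D0] by simp
  qed
  have hens: "\<exists>\<alpha>. poly f \<alpha> = 0 \<and> Gv v (int r + 1) (\<alpha> - x)"
    if x: "Gv v 0 x" and fx: "Gv v (int N) (poly f x)" for x
  proof -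
    define e where "e = v (poly (pderiv f) x)"
    have fp0: "poly (pderiv f) x \<noteq> 0" and eD: "e \<le> v \<Delta>" using fpb[OF x fx] by (auto simp: e_def)
    have c: "int N \<ge> 2 * e + 1" using NvD eD by linarith
    obtain \<alpha> where \<alpha>: "poly f \<alpha> = 0" "Gv v 0 \<alpha>" "Gv v (int N - e) (\<alpha> - x)"
      using hensel[OF compl cf x fp0 e_def[symmetric] fx c] by blast
    have le: "int r + 1 \<le> int N - e" using rD NvD eD by linarith
    show ?thesis using \<alpha>(1) G_mono[OF le \<alpha>(3)] by blast
  qed
  have red_iff: "(y \<in> red v \<pi> N x) = (Gv v 0 x \<and> Gv v 0 y \<and> Gv v (int N) (x - y))" for x y
    unfolding red_def modrel_def Image_singleton_iff mem_Collect_eq case_prod_conv vr pid ..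
  have redf: "(red v \<pi> N (poly f x) = red v \<pi> N 0) = Gv v (int N) (poly f x)" if x: "Gv v 0 x" for x
  proof
    assume eq: "red v \<pi> N (poly f x) = red v \<pi> N 0"
    have "0 \<in> red v \<pi> N 0" unfolding red_iff by simp
    then have "0 \<in> red v \<pi> N (poly f x)" using eq by simp
    then show "Gv v (int N) (poly f x)" unfolding red_iff by simp
  next
    assume G: "Gv v (int N) (poly f x)"
    have fxA: "Gv v 0 (poly f x)" by (rule poly_G[OF cf x])
    show "red v \<pi> N (poly f x) = red v \<pi> N 0"
    proof (rule Set.set_eqI)
      fix y
      have "Gv v (int N) (poly f x - y) = Gv v (int N) (0 - y)"
      proof
        assume "Gv v (int N) (poly f x - y)"
        from G_diff[OF this G] show "Gv v (int N) (0 - y)" by simp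
      next
        assume "Gv v (int N) (0 - y)"
        from G_add[OF G this] show "Gv v (int N) (poly f x - y)" by simp
      qed
      then show "(y \<in> red v \<pi> N (poly f x)) = (y \<in> red v \<pi> N 0)" unfolding red_iff using fxA by simp
    qed
  qed
  define S where "S = roots_mod v \<pi> N f"
  have S_iff: "(X \<in> S) = (\<exists>x. X = red v \<pi> N x \<and> Gv v 0 x \<and> Gv v (int N) (poly f x))" for X
  proof
    assume "X \<in> S"
    then obtain x where "X = red v \<pi> N x" "x \<in> valring v" "red v \<pi> N (poly f x) = red v \<pi> N 0"
      unfolding S_def roots_mod_def by blast
    then show "\<exists>x. X = red v \<pi> N x \<and> Gv v 0 x \<and> Gv v (int N) (poly f x)" using redf vr by blast
  next
    assume "\<exists>x. X = red v \<pi> N x \<and> Gv v 0 x \<and> Gv v (int N) (poly f x)"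
    then obtain x where x: "X = red v \<pi> N x" "Gv v 0 x" "Gv v (int N) (poly f x)" by blast
    then have "x \<in> valring v" "red v \<pi> N (poly f x) = red v \<pi> N 0" using redf vr by blast+
    then show "X \<in> S" unfolding S_def roots_mod_def using x(1) by blast
  qed
  have aux: "(\<exists>a\<in>pideal v \<pi> (r + 1). \<exists>b\<in>pideal v \<pi> N. z = a + b) = Gv v (int r + 1) z" for z
  proof
    assume "\<exists>a\<in>pideal v \<pi> (r + 1). \<exists>b\<in>pideal v \<pi> N. z = a + b"
    then obtain a b where ab0: "a \<in> pideal v \<pi> (r + 1)" "b \<in> pideal v \<pi> N" "z = a + b" by blast
    have ab: "Gv v (int r + 1) a" "Gv v (int N) b" "z = a + b"
      using ab0 pid[of a "r + 1"] pid[of b N] by (simp_all add: add.commute)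
    have "Gv v (int r + 1) b" by (rule G_mono[OF _ ab(2)]) (use Nr in linarith)
    then show "Gv v (int r + 1) z" using G_add[OF ab(1)] ab(3) by simp
  next
    assume "Gv v (int r + 1) z"
    then have "z \<in> pideal v \<pi> (r + 1)" "0 \<in> pideal v \<pi> N" using pid[of z "r + 1"] pid[of 0 N] by (simp_all add: add.commute)
    then show "\<exists>a\<in>pideal v \<pi> (r + 1). \<exists>b\<in>pideal v \<pi> N. z = a + b" by force
  qed
  define R where "R = approx_rel v \<pi> N r f"
  have R_iff: "((X,Y) \<in> R) = (X \<in> S \<and> Y \<in> S \<and> (\<exists>x\<in>X. \<exists>y\<in>Y. Gv v (int r + 1) (x - y)))" for X Y
    unfolding R_def approx_rel_def S_def[symmetric] using Nr aux by simp
  have Rchar: "((red v \<pi> N x, red v \<pi> N y) \<in> R) = Gv v (int r + 1) (x - y)"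
    if x: "Gv v 0 x" "Gv v (int N) (poly f x)" and y: "Gv v 0 y" "Gv v (int N) (poly f y)" for x y
  proof
    assume "(red v \<pi> N x, red v \<pi> N y) \<in> R"
    then obtain x' y' where x': "x' \<in> red v \<pi> N x" and y': "y' \<in> red v \<pi> N y"
      and G: "Gv v (int r + 1) (x' - y')" unfolding R_iff by blast
    have "Gv v (int N) (x - x')" "Gv v (int N) (y - y')" using x' y' unfolding red_iff by simp_all
    then have g1: "Gv v (int r + 1) (x - x')" "Gv v (int r + 1) (y - y')"
      using G_mono[of "int r + 1" "int N"] Nr by simp_all
    have "x - y = ((x - x') + (x' - y')) - (y - y')" by simp
    then show "Gv v (int r + 1) (x - y)" using G_diff[OF G_add[OF g1(1) G] g1(2)] by simp
  next
    assume G: "Gv v (int r + 1) (x - y)"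
    have "red v \<pi> N x \<in> S" "red v \<pi> N y \<in> S" unfolding S_iff using x y by blast+
    moreover have "x \<in> red v \<pi> N x" "y \<in> red v \<pi> N y" unfolding red_iff using x y by simp_all
    ultimately show "(red v \<pi> N x, red v \<pi> N y) \<in> R" unfolding R_iff using G by blast
  qed
  have fA: "Gv v 0 \<alpha> \<and> Gv v (int N) (poly f \<alpha>)" if "poly f \<alpha> = 0" for \<alpha>
    using roots[OF that] that by simp
  have inS: "red v \<pi> N \<alpha> \<in> S" if "poly f \<alpha> = 0" for \<alpha>
    unfolding S_iff using fA[OF that] by blast
  have rootsub: "{x. poly f x = 0} \<subseteq> valring v" using roots vr by blast
  have bij: "bij_betw (\<lambda>x. R `` {red v \<pi> N x}) {x. poly f x = 0} (S // R)"
    unfolding bij_betw_def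
  proof
    show "inj_on (\<lambda>x. R `` {red v \<pi> N x}) {x. poly f x = 0}"
    proof (rule inj_onI)
      fix \<alpha> \<beta> assume a: "\<alpha> \<in> {x. poly f x = 0}" and b: "\<beta> \<in> {x. poly f x = 0}"
        and eq: "R `` {red v \<pi> N \<alpha>} = R `` {red v \<pi> N \<beta>}"
      have fa: "poly f \<alpha> = 0" and fb: "poly f \<beta> = 0" using a b by simp_all
      have "(red v \<pi> N \<beta>, red v \<pi> N \<beta>) \<in> R" using Rchar[OF conjunct1[OF fA[OF fb]] conjunct2[OF fA[OF fb]]
          conjunct1[OF fA[OF fb]] conjunct2[OF fA[OF fb]]] by simp
      then have "red v \<pi> N \<beta> \<in> R `` {red v \<pi> N \<alpha>}" using eq by simp
      then have "(red v \<pi> N \<alpha>, red v \<pi> N \<beta>) \<in> R" by simp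
      then have "Gv v (int r + 1) (\<alpha> - \<beta>)" using Rchar[OF conjunct1[OF fA[OF fa]] conjunct2[OF fA[OF fa]]
          conjunct1[OF fA[OF fb]] conjunct2[OF fA[OF fb]]] by simp
      then show "\<alpha> = \<beta>" by (rule sep[OF fa fb])
    qed
    show "(\<lambda>x. R `` {red v \<pi> N x}) ` {x. poly f x = 0} = S // R"
    proof
      show "(\<lambda>x. R `` {red v \<pi> N x}) ` {x. poly f x = 0} \<subseteq> S // R"
      proof
        fix Y assume "Y \<in> (\<lambda>x. R `` {red v \<pi> N x}) ` {x. poly f x = 0}"
        then obtain \<alpha> where "poly f \<alpha> = 0" "Y = R `` {red v \<pi> N \<alpha>}" by blast
        then show "Y \<in> S // R" using quotientI[OF inS] by simp
      qed
      show "S // R \<subseteq> (\<lambda>x. R `` {red v \<pi> N x}) ` {x. poly f x = 0}"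
      proof
        fix Y assume "Y \<in> S // R"
        then obtain X where X: "X \<in> S" "Y = R `` {X}" by (rule quotientE)
        then obtain x0 where x0: "X = red v \<pi> N x0" "Gv v 0 x0" "Gv v (int N) (poly f x0)"
          unfolding S_iff by blast
        obtain \<alpha> where \<alpha>: "poly f \<alpha> = 0" "Gv v (int r + 1) (\<alpha> - x0)" using hens[OF x0(2,3)] by blast
        note fa = conjunct1[OF fA[OF \<alpha>(1)]] conjunct2[OF fA[OF \<alpha>(1)]]
        have "R `` {red v \<pi> N \<alpha>} = R `` {red v \<pi> N x0}"
        proof (rule Set.set_eqI)
          fix Z
          have "((red v \<pi> N \<alpha>, Z) \<in> R) = ((red v \<pi> N x0, Z) \<in> R)"
          proof
            assume A: "(red v \<pi> N \<alpha>, Z) \<in> R"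
            then have "Z \<in> S" unfolding R_iff by simp
            then obtain z where z: "Z = red v \<pi> N z" "Gv v 0 z" "Gv v (int N) (poly f z)"
              unfolding S_iff by blast
            have "Gv v (int r + 1) (\<alpha> - z)" using A unfolding z(1) Rchar[OF fa z(2,3)] .
            from G_diff[OF this \<alpha>(2)] have "Gv v (int r + 1) (x0 - z)" by simp
            then show "(red v \<pi> N x0, Z) \<in> R" unfolding z(1) Rchar[OF x0(2,3) z(2,3)] .
          next
            assume A: "(red v \<pi> N x0, Z) \<in> R"
            then have "Z \<in> S" unfolding R_iff by simp
            then obtain z where z: "Z = red v \<pi> N z" "Gv v 0 z" "Gv v (int N) (poly f z)"
              unfolding S_iff by blast
            have "Gv v (int r + 1) (x0 - z)" using A unfolding z(1) Rchar[OF x0(2,3) z(2,3)] .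
            from G_add[OF this \<alpha>(2)] have "Gv v (int r + 1) (\<alpha> - z)" by simp
            then show "(red v \<pi> N \<alpha>, Z) \<in> R" unfolding z(1) Rchar[OF fa z(2,3)] .
          qed
          then show "(Z \<in> R `` {red v \<pi> N \<alpha>}) = (Z \<in> R `` {red v \<pi> N x0})" by simp
        qed
        then have "Y = R `` {red v \<pi> N \<alpha>}" using X(2) x0(1) by simp
        then show "Y \<in> (\<lambda>x. R `` {red v \<pi> N x}) ` {x. poly f x = 0}" using \<alpha>(1) by blast
      qed
    qed
  qed
  have card: "card {x. poly f x = 0} = card (S // R)" by (rule bij_betw_same_card[OF bij])
  show ?thesis using rootsub bij card unfolding S_def R_def r_def \<Delta>_def by simp
qed

end
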